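(* Let $T$ be a string of length $n$ and $1\le i\le j<n$. For each $[s,t]\in\mathsf{MUS}(T[i..j+1])$ with $t\ne j+1$, if $[s,t]\notin\mathsf{MUS}(T[i..j])$ then $\#\mathit{occ}_{T[i..j+1]}(\mathit{sqs}_{i,j+1})=2$ and $\mathit{sqs}_{i,j+1}$ is a proper substring of $T[s..t]$.
   Context: $T[a..b]$ denotes the substring of $T$ from position $a$ to $b$. For strings $S,w$, $\#\mathit{occ}_S(w)$ is the number of positions at which $w$ occurs in $S$, with $\#\mathit{occ}_S(\varepsilon)=|S|+1$. A substring $w$ of $S$ is unique in $S$ if $\#\mathit{occ}_S(w)=1$ and repeating if $\#\mathit{occ}_S(w)\ge 2$. For $1\le i\le j\le n$, $\mathsf{MUS}(T[i..j])$ is the set of intervals $[s,t]$ (positions in $T$) with $i\le s\le t\le j$ such that $T[s..t]$ is unique in $T[i..j]$ and every proper substring of $T[s..t]$ (including the empty string) is repeating in $T[i..j]$. $\mathit{sqs}_{i,j}$ is the shortest suffix of $T[i..j]$ that occurs at most twice in $T[i..j]$. *)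

theory Defs
  imports Main "HOL-Library.Sublist"
begin

text \<open>Strings are lists; positions are 1-based. substr T a b is T[a..b].\<close>
definition substr :: "'a list \<Rightarrow> nat \<Rightarrow> nat \<Rightarrow> 'a list" where
  "substr T a b = take (Suc b - a) (drop (a - 1) T)"

text \<open>Number of (0-based) starting positions at which w occurs in S;
  for the empty word this is length S + 1.\<close>
definition occ :: "'a list \<Rightarrow> 'a list \<Rightarrow> nat" where
  "occ S w = card {p. p + length w \<le> length S \<and> take (length w) (drop p S) = w}"

definition unique_in :: "'a list \<Rightarrow> 'a list \<Rightarrow> bool" where
  "unique_in S w \<longleftrightarrow> occ S w = 1"

definition repeating_in :: "'a list \<Rightarrow> 'a list \<Rightarrow> bool" where
  "repeating_in S w \<longleftrightarrow> occ S w \<ge> 2"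

definition MUS :: "'a list \<Rightarrow> nat \<Rightarrow> nat \<Rightarrow> (nat \<times> nat) set" where
  "MUS T i j = {(s, t). i \<le> s \<and> s \<le> t \<and> t \<le> j
      \<and> unique_in (substr T i j) (substr T s t)
      \<and> (\<forall>w. strict_sublist w (substr T s t) \<longrightarrow> repeating_in (substr T i j) w)}"

definition sqs_str :: "'a list \<Rightarrow> 'a list" where
  "sqs_str S = drop (length S - (LEAST k. k \<le> length S \<and> occ S (drop (length S - k) S) \<le> 2)) S"

definition sqs :: "'a list \<Rightarrow> nat \<Rightarrow> nat \<Rightarrow> 'a list" where
  "sqs T i j = sqs_str (substr T i j)"

end

theory Submission
  imports Defs
begin

definition occset :: "'a list \<Rightarrow> 'a list \<Rightarrow> nat set" where
  "occset S w = {p. p + length w \<le> length S \<and> take (length w) (drop p S) = w}"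

lemma occ_occset: "occ S w = card (occset S w)"
  by (simp add: occ_def occset_def)

lemma occset_fin: "finite (occset S w)"
  by (rule finite_subset[of _ "{..length S}"]) (auto simp: occset_def)

lemma occ_snoc_le: "occ S w \<le> occ (S @ [c]) w"
  unfolding occ_occset
proof (rule card_mono[OF occset_fin])
  show "occset S w \<subseteq> occset (S @ [c]) w"
    by (auto simp: occset_def)
qed

lemma occset_snoc: "occset (S @ [c]) w \<subseteq> insert (Suc (length S) - length w) (occset S w)"
proof
  fix p assume "p \<in> occset (S @ [c]) w"
  hence a: "p + length w \<le> Suc (length S)" "take (length w) (drop p (S @ [c])) = w"
    by (auto simp: occset_def)
  show "p \<in> insert (Suc (length S) - length w) (occset S w)"
  proof (cases "p + length w \<le> length S")
    case True
    then show ?thesis using a by (auto simp: occset_def)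
  next
    case False
    then show ?thesis using a by auto
  qed
qed

lemma occ_snoc_ge: "occ (S @ [c]) w \<le> Suc (occ S w)"
  unfolding occ_occset
proof -
  have "card (occset (S @ [c]) w) \<le> card (insert (Suc (length S) - length w) (occset S w))"
    by (rule card_mono) (simp_all add: occset_fin occset_snoc)
  also have "\<dots> \<le> Suc (card (occset S w))" by (simp add: card_insert_if occset_fin)
  finally show "card (occset (S @ [c]) w) \<le> Suc (card (occset S w))" .
qed

lemma occ_snoc_new:
  assumes "occ S w < occ (S @ [c]) w"
  shows "suffix w (S @ [c])"
proof -
  have "\<not> occset (S @ [c]) w \<subseteq> occset S w"
  proof
    assume "occset (S @ [c]) w \<subseteq> occset S w"
    hence "card (occset (S @ [c]) w) \<le> card (occset S w)" by (rule card_mono[OF occset_fin])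
    thus False using assms unfolding occ_occset by simp
  qed
  then obtain p where p: "p \<in> occset (S @ [c]) w" "p \<notin> occset S w" by auto
  hence a: "p + length w \<le> Suc (length S)" "take (length w) (drop p (S @ [c])) = w"
    by (auto simp: occset_def)
  have "\<not> p + length w \<le> length S"
    using p a by (auto simp: occset_def)
  hence "p + length w = Suc (length S)" using a by auto
  hence "length (drop p (S @ [c])) = length w" by simp
  hence "drop p (S @ [c]) = w" using a(2) by simp
  thus ?thesis using suffix_drop[of p "S @ [c]"] by simp
qed

lemma occ_drop: "occ S w \<le> occ S (drop k w)"
  unfolding occ_occset
proof (rule card_inj_on_le[OF _ _ occset_fin])
  show "inj_on (\<lambda>p. p + min k (length w)) (occset S w)" by (auto simp: inj_on_def)
  show "(\<lambda>p. p + min k (length w)) ` occset S w \<subseteq> occset S (drop k w)"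
  proof
    fix q assume "q \<in> (\<lambda>p. p + min k (length w)) ` occset S w"
    then obtain p where q: "q = p + min k (length w)" and p: "p \<in> occset S w" by auto
    hence a: "p + length w \<le> length S" "take (length w) (drop p S) = w"
      by (auto simp: occset_def)
    have "drop k w = drop k (take (length w) (drop p S))" using a by simp
    also have "\<dots> = take (length w - k) (drop (p + k) S)"
      by (simp add: drop_take add.commute)
    finally have "take (length (drop k w)) (drop q S) = drop k w"
      using q by (cases "k \<le> length w") (auto simp: min_def)
    thus "q \<in> occset S (drop k w)" using a q by (auto simp: occset_def min_def)
  qed
qed

theorem lemma5:
  fixes T :: "'a list" and i j s t :: nat
  assumes "1 \<le> i" "i \<le> j" "j < length T"
    and "(s, t) \<in> MUS T i (Suc j)" "t \<noteq> Suc j"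
    and "(s, t) \<notin> MUS T i j"
  shows "occ (substr T i (Suc j)) (sqs T i (Suc j)) = 2
         \<and> strict_sublist (sqs T i (Suc j)) (substr T s t)"
proof -
  define S where "S = substr T i j"
  define S' where "S' = substr T i (Suc j)"
  define u where "u = substr T s t"
  have S'eq: "S' = S @ [T ! j]"
    using assms(1-3) unfolding S_def S'_def substr_def
    by (simp add: Suc_diff_le take_Suc_conv_app_nth)
  have lenS: "length S = Suc j - i" using assms(1-3) by (simp add: S_def substr_def)
  have M: "i \<le> s" "s \<le> t" "t \<le> Suc j" "occ S' u = 1"
      "\<And>w. strict_sublist w u \<Longrightarrow> occ S' w \<ge> 2"
    using assms(4) by (auto simp: MUS_def S'_def u_def unique_in_def repeating_in_def)
  have tj: "t \<le> j" using M(3) assms(5) by simp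
  have "\<exists>w. strict_sublist w u \<and> occ S w \<le> 1"
  proof (rule ccontr)
    assume nw: "\<not> ?thesis"
    have "occ S u \<noteq> 1"
      using assms(6) M(1,2) tj nw by (auto simp: MUS_def S_def u_def unique_in_def repeating_in_def)
    moreover have "occ S u \<le> 1" using M(4) occ_snoc_le[of S u "T ! j"] S'eq by simp
    moreover have "occ S u \<ge> 1"
    proof -
      have "s - i \<in> occset S u"
        using assms(1-3) M(1,2) tj unfolding occset_def S_def u_def substr_def
        by (simp add: drop_take min_def) linarith
      hence "occset S u \<noteq> {}" by auto
      thus ?thesis using occset_fin[of S u] unfolding occ_occset
        by (simp add: Suc_leI card_gt_0_iff)
    qed
    ultimately show False by simp
  qed
  then obtain w where w: "strict_sublist w u" "occ S w \<le> 1" by auto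
  have o2: "occ S' w \<ge> 2" using M(5) w(1) by simp
  have o2': "occ S' w \<le> 2" using occ_snoc_ge[of S "T ! j" w] S'eq w(2) by simp
  have sufw: "suffix w S'" using occ_snoc_new[of S w "T ! j"] S'eq o2 w(2) by simp
  hence wdrop: "w = drop (length S' - length w) S'"
    by (auto simp: suffix_def)
  define P where "P = (\<lambda>k. k \<le> length S' \<and> occ S' (drop (length S' - k) S') \<le> 2)"
  define K where "K = (LEAST k. P k)"
  have Pw: "P (length w)" unfolding P_def using wdrop o2' suffix_length_le[OF sufw] by simp
  have PK: "P K" unfolding K_def by (rule LeastI[of P, OF Pw])
  have Kw: "K \<le> length w" unfolding K_def by (rule Least_le[of P, OF Pw])
  have sq: "sqs T i (Suc j) = drop (length S' - K) S'"
    by (simp add: sqs_def sqs_str_def S'_def P_def K_def)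
  have sqw: "drop (length S' - K) S' = drop (length w - K) w"
  proof -
    have "drop (length w - K) w = drop (length w - K + (length S' - length w)) S'"
      using arg_cong[OF wdrop, of "drop (length w - K)"] by (simp add: drop_drop)
    moreover have "length w - K + (length S' - length w) = length S' - K"
      using Kw suffix_length_le[OF sufw] by simp
    ultimately show ?thesis by simp
  qed
  have "occ S' (drop (length w - K) w) \<ge> 2" using occ_drop[of S' w "length w - K"] o2 by simp
  hence occ2: "occ S' (sqs T i (Suc j)) = 2" using PK sq sqw unfolding P_def by simp
  have "sublist (drop (length w - K) w) w" by (simp add: suffix_drop suffix_imp_sublist)
  hence "strict_sublist (drop (length w - K) w) u" using w(1) sublist_order.le_less_trans by blast
  thus ?thesis using occ2 sq sqw S'_def u_def by simp
qed

end
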